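(* Let $R$ be a commutative Noetherian ring of prime characteristic $p$ and suppose $c$ is a $p^{w_0}$-weak test element for $R$ for some $w_0\in\mathbb{N}_0$. For each ideal $\mathfrak{a}$ of $R$ let $G(\mathfrak{a})=\bigoplus_{n\ge0}R/(\mathfrak{a}^{[p^n]})^F$ be the graded left $R[x,f]$-module with $x(r+(\mathfrak{a}^{[p^n]})^F)=r^p+(\mathfrak{a}^{[p^{n+1}]})^F$, and let $G:=\bigoplus_{\mathfrak{a}}G(\mathfrak{a})$ over all ideals $\mathfrak{a}$ of $R$ (an $x$-torsion-free module). Let $U:=\bigoplus_{\mathfrak{a}}\bigoplus_{n\ge0}(\mathfrak{a}^{[p^n]})^*/(\mathfrak{a}^{[p^n]})^F$. Then (i) $U=\operatorname{ann}_G(\bigoplus_{n\ge0}Rcx^n)$, so $U$ is a special annihilator submodule of $G$; (ii) if $\mathfrak{b}$ is the $G$-special $R$-ideal with $\operatorname{grann}_{R[x,f]}U=\bigoplus_{n\ge0}\mathfrak{b}x^n$, then $\mathfrak{b}$ is the smallest member of $\mathcal{I}(G)$ of positive height.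
   Context: $R[x,f]$ is the Frobenius skew polynomial ring: free left $R$-module on $(x^i)_{i\ge0}$, $xr=r^px$. The Frobenius closure is $\mathfrak{a}^F=\{r: r^{p^n}\in\mathfrak{a}^{[p^n]}\text{ for some }n\}$, where $\mathfrak{a}^{[p^n]}$ is generated by $p^n$-th powers. $\operatorname{ann}_G\mathfrak{B}$, for a graded two-sided ideal $\mathfrak{B}=\bigoplus\mathfrak{b}_nx^n$ ($(\mathfrak{b}_n)$ ascending), is the set of elements killed by $\mathfrak{B}$; special annihilator submodules are those of this form. $\operatorname{grann}N$ is the set of $\sum r_ix^i$ with each $r_ix^i$ annihilating $N$. An ideal $\mathfrak{b}$ is $G$-special if $\operatorname{grann}N=\bigoplus_n\mathfrak{b}x^n$ for some submodule $N$; $\mathcal{I}(G)$ is the set of these; $R$ has infinite height. $R^\circ$, tight closure $\mathfrak{a}^*$ as usual. A $p^{w_0}$-weak test element is $c\in R^\circ$ such that for every ideal $\mathfrak{b}$ and $r\in R$: $r\in\mathfrak{b}^*$ iff $cr^{p^n}\in\mathfrak{b}^{[p^n]}$ for all $n\ge w_0$. *)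

theory Defs
  imports Main "HOL-Library.Extended_Nat" "HOL-Computational_Algebra.Primes"
begin

definition is_ideal :: "'a::comm_ring_1 set \<Rightarrow> bool" where
  "is_ideal I \<longleftrightarrow> 0 \<in> I \<and> (\<forall>x\<in>I. \<forall>y\<in>I. x + y \<in> I) \<and> (\<forall>r. \<forall>x\<in>I. r * x \<in> I)"

definition ideal_gen :: "'a::comm_ring_1 set \<Rightarrow> 'a set" where
  "ideal_gen S = \<Inter>{I. is_ideal I \<and> S \<subseteq> I}"

definition noetherian :: "'a::comm_ring_1 itself \<Rightarrow> bool" where
  "noetherian _ \<longleftrightarrow> (\<forall>I::'a set. is_ideal I \<longrightarrow> (\<exists>S. finite S \<and> I = ideal_gen S))"

definition is_prime_ideal :: "'a::comm_ring_1 set \<Rightarrow> bool" where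
  "is_prime_ideal P \<longleftrightarrow> is_ideal P \<and> P \<noteq> UNIV \<and> (\<forall>a b. a * b \<in> P \<longrightarrow> a \<in> P \<or> b \<in> P)"

definition is_minimal_prime :: "'a::comm_ring_1 set \<Rightarrow> bool" where
  "is_minimal_prime P \<longleftrightarrow> is_prime_ideal P \<and> \<not> (\<exists>Q. is_prime_ideal Q \<and> Q \<subset> P)"

definition R_circ :: "'a::comm_ring_1 set" where
  "R_circ = {c. \<forall>P. is_minimal_prime P \<longrightarrow> c \<notin> P}"

text \<open>Height of a prime: supremum of lengths n of chains P_0 < P_1 < ... < P_n = P of primes;
  height of an ideal: infimum of the heights of the primes containing it (infinity for the unit ideal).\<close>
definition prime_height :: "'a::comm_ring_1 set \<Rightarrow> enat" where
  "prime_height P = Sup {enat n | n. \<exists>C::nat \<Rightarrow> 'a set. (\<forall>i\<le>n. is_prime_ideal (C i))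
       \<and> (\<forall>i<n. C i \<subset> C (Suc i)) \<and> C n = P}"

definition ideal_height :: "'a::comm_ring_1 set \<Rightarrow> enat" where
  "ideal_height I = (INF P\<in>{P. is_prime_ideal P \<and> I \<subseteq> P}. prime_height P)"

definition frob_pow :: "'a::comm_ring_1 set \<Rightarrow> nat \<Rightarrow> 'a set" where
  "frob_pow a q = ideal_gen {r ^ q | r. r \<in> a}"

definition frob_closure :: "nat \<Rightarrow> 'a::comm_ring_1 set \<Rightarrow> 'a set" where
  "frob_closure p a = {r. \<exists>n. r ^ (p ^ n) \<in> frob_pow a (p ^ n)}"

definition tight_closure :: "nat \<Rightarrow> 'a::comm_ring_1 set \<Rightarrow> 'a set" where
  "tight_closure p a = {r. \<exists>c\<in>R_circ. \<exists>N. \<forall>n\<ge>N. c * r ^ (p ^ n) \<in> frob_pow a (p ^ n)}"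

definition weak_test_element :: "nat \<Rightarrow> nat \<Rightarrow> 'a::comm_ring_1 \<Rightarrow> bool" where
  "weak_test_element p w0 c \<longleftrightarrow> c \<in> R_circ \<and>
     (\<forall>b r. is_ideal b \<longrightarrow>
        (r \<in> tight_closure p b \<longleftrightarrow> (\<forall>n\<ge>w0. c * r ^ (p ^ n) \<in> frob_pow b (p ^ n))))"

text \<open>An element of G is a function g sending an ideal a and degree n to a coset of
  J a n = (a^[p^n])^F in R, almost all of them zero (i.e. equal to J a n).  For sets a that
  are not ideals the component is forced to be zero.\<close>

definition Jc :: "nat \<Rightarrow> 'a::comm_ring_1 set \<Rightarrow> nat \<Rightarrow> 'a set" where
  "Jc p a n = frob_closure p (frob_pow a (p ^ n))"

definition coset :: "'a::comm_ring_1 \<Rightarrow> 'a set \<Rightarrow> 'a set" where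
  "coset r I = (\<lambda>i. r + i) ` I"

definition Gcar :: "nat \<Rightarrow> ('a::comm_ring_1 set \<Rightarrow> nat \<Rightarrow> 'a set) set" where
  "Gcar p = {g. (\<forall>a n. is_ideal a \<longrightarrow> (\<exists>r. g a n = coset r (Jc p a n)))
               \<and> (\<forall>a n. \<not> is_ideal a \<longrightarrow> g a n = Jc p a n)
               \<and> finite {(a, n). g a n \<noteq> Jc p a n}}"

definition Gzero :: "nat \<Rightarrow> 'a::comm_ring_1 set \<Rightarrow> nat \<Rightarrow> 'a set" where
  "Gzero p = (\<lambda>a n. Jc p a n)"

definition Gadd :: "('a::comm_ring_1 set \<Rightarrow> nat \<Rightarrow> 'a set) \<Rightarrow> ('a set \<Rightarrow> nat \<Rightarrow> 'a set)
    \<Rightarrow> ('a set \<Rightarrow> nat \<Rightarrow> 'a set)" where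
  "Gadd g h = (\<lambda>a n. {s + t | s t. s \<in> g a n \<and> t \<in> h a n})"

text \<open>Action of the homogeneous element r x^k of R[x,f]:
  r x^k (s + J a m) = r s^(p^k) + J a (m+k).\<close>
definition Gact :: "nat \<Rightarrow> 'a::comm_ring_1 \<Rightarrow> nat \<Rightarrow> ('a set \<Rightarrow> nat \<Rightarrow> 'a set)
    \<Rightarrow> ('a set \<Rightarrow> nat \<Rightarrow> 'a set)" where
  "Gact p r k g = (\<lambda>a m. if is_ideal a \<and> k \<le> m
       then {r * s ^ (p ^ k) + j | s j. s \<in> g a (m - k) \<and> j \<in> Jc p a m}
       else Jc p a m)"

text \<open>R[x,f]-submodules of G (closure under all r x^k; additive inverses come from r = -1).\<close>
definition Gsubmodule :: "nat \<Rightarrow> ('a::comm_ring_1 set \<Rightarrow> nat \<Rightarrow> 'a set) set \<Rightarrow> bool" where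
  "Gsubmodule p N \<longleftrightarrow> N \<subseteq> Gcar p \<and> Gzero p \<in> N \<and> (\<forall>g\<in>N. \<forall>h\<in>N. Gadd g h \<in> N)
      \<and> (\<forall>r k. \<forall>g\<in>N. Gact p r k g \<in> N)"

text \<open>ann_G of the graded two-sided ideal (+)_n b_n x^n.\<close>
definition Gann :: "nat \<Rightarrow> (nat \<Rightarrow> 'a::comm_ring_1 set) \<Rightarrow> ('a set \<Rightarrow> nat \<Rightarrow> 'a set) set" where
  "Gann p bs = {g \<in> Gcar p. \<forall>n. \<forall>r\<in>bs n. Gact p r n g = Gzero p}"

text \<open>The degree-n component of grann N: grann N = (+)_n (grann_comp N n) x^n.\<close>
definition grann_comp :: "nat \<Rightarrow> ('a::comm_ring_1 set \<Rightarrow> nat \<Rightarrow> 'a set) set \<Rightarrow> nat \<Rightarrow> 'a set" where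
  "grann_comp p N n = {r. \<forall>g\<in>N. Gact p r n g = Gzero p}"

definition G_special_ideals :: "nat \<Rightarrow> 'a::comm_ring_1 set set" where
  "G_special_ideals p = {b. \<exists>N. Gsubmodule p N \<and> (\<forall>n. grann_comp p N n = b)}"

definition Usub :: "nat \<Rightarrow> ('a::comm_ring_1 set \<Rightarrow> nat \<Rightarrow> 'a set) set" where
  "Usub p = {g \<in> Gcar p. \<forall>a n. is_ideal a \<longrightarrow> g a n \<subseteq> tight_closure p (frob_pow a (p ^ n))}"

end

theory Submission imports Defs begin

section \<open>Ideals\<close>

lemma ideal_gen_ideal: "is_ideal (ideal_gen S)"
  unfolding is_ideal_def ideal_gen_def by auto

lemma ideal_gen_sub: "S \<subseteq> ideal_gen S"
  unfolding ideal_gen_def by auto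

lemma ideal_gen_least: "is_ideal I \<Longrightarrow> S \<subseteq> I \<Longrightarrow> ideal_gen S \<subseteq> I"
  unfolding ideal_gen_def by auto

lemma ideal_0: "is_ideal I \<Longrightarrow> 0 \<in> I"
  unfolding is_ideal_def by auto

lemma ideal_add: "is_ideal I \<Longrightarrow> x \<in> I \<Longrightarrow> y \<in> I \<Longrightarrow> x + y \<in> I"
  unfolding is_ideal_def by auto

lemma ideal_mult: "is_ideal I \<Longrightarrow> x \<in> I \<Longrightarrow> r * x \<in> I"
  unfolding is_ideal_def by auto

lemma ideal_mult2: "is_ideal I \<Longrightarrow> x \<in> I \<Longrightarrow> x * r \<in> I"
  unfolding is_ideal_def by (auto simp: mult.commute)

lemma ideal_neg: "is_ideal I \<Longrightarrow> x \<in> I \<Longrightarrow> - x \<in> I"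
  using ideal_mult[of I x "-1"] by simp

lemma ideal_diff: "is_ideal I \<Longrightarrow> x \<in> I \<Longrightarrow> y \<in> I \<Longrightarrow> x - y \<in> I"
  using ideal_add[of I x "-y"] ideal_neg[of I y] by simp

lemma ideal_gen_single: "ideal_gen {c} = range (\<lambda>r. r * (c::'a::comm_ring_1))"
proof
  have "is_ideal (range (\<lambda>r. r * c))"
    unfolding is_ideal_def
  proof (intro conjI ballI allI)
    show "0 \<in> range (\<lambda>r. r * c)" by (rule range_eqI[of _ _ 0]) simp
  next
    fix x y assume "x \<in> range (\<lambda>r. r * c)" "y \<in> range (\<lambda>r. r * c)"
    then obtain u v where "x = u * c" "y = v * c" by blast
    then have "x + y = (u + v) * c" by (simp add: distrib_right)
    then show "x + y \<in> range (\<lambda>r. r * c)" by (rule range_eqI)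
  next
    fix r x assume "x \<in> range (\<lambda>r. r * c)"
    then obtain u where "x = u * c" by blast
    then have "r * x = (r * u) * c" by (simp add: mult.assoc)
    then show "r * x \<in> range (\<lambda>r. r * c)" by (rule range_eqI)
  qed
  moreover have "c \<in> range (\<lambda>r. r * c)" by (rule range_eqI[of _ _ 1]) simp
  ultimately show "ideal_gen {c} \<subseteq> range (\<lambda>r. r * c)"
    by (intro ideal_gen_least) simp_all
  have cc: "c \<in> ideal_gen {c}" using ideal_gen_sub[of "{c}"] by (simp only: insert_subset)
  show "range (\<lambda>r. r * c) \<subseteq> ideal_gen {c}"
  proof (rule subsetI, erule rangeE)
    fix x r assume "x = r * c"
    then show "x \<in> ideal_gen {c}" using ideal_mult[OF ideal_gen_ideal cc, of r] by simp
  qed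
qed

lemma frob_pow_ideal: "is_ideal (frob_pow a q)"
  unfolding frob_pow_def by (rule ideal_gen_ideal)

lemma frob_pow_gen: "x \<in> a \<Longrightarrow> x ^ q \<in> frob_pow a q"
  unfolding frob_pow_def by (rule subsetD[OF ideal_gen_sub]) blast

lemma prime_not_1: "is_prime_ideal P \<Longrightarrow> (1::'a::comm_ring_1) \<notin> P"
  unfolding is_prime_ideal_def using ideal_mult[of P 1] by auto

lemma one_Rcirc: "(1::'a::comm_ring_1) \<in> R_circ"
  unfolding R_circ_def is_minimal_prime_def using prime_not_1 by blast

lemma Rcirc_mult: "c \<in> R_circ \<Longrightarrow> d \<in> R_circ \<Longrightarrow> c * d \<in> R_circ"
  unfolding R_circ_def is_minimal_prime_def is_prime_ideal_def by blast

lemma Rcirc_pow: "c \<in> R_circ \<Longrightarrow> c ^ n \<in> R_circ"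
  by (induction n) (auto simp: one_Rcirc Rcirc_mult)

section \<open>Frobenius\<close>

context
  fixes p :: nat
  assumes pr: "prime p" and ch: "CHAR('a::comm_ring_1) = p"
begin

lemma fd: "((x::'a) + y) ^ (p ^ n) = x ^ (p ^ n) + y ^ (p ^ n)"
proof -
  have "prime CHAR('a)" using pr ch by simp
  then show ?thesis using freshmans_dream'[where m="p^n" and n=n and x=x and y=y] ch by simp
qed

lemma ppos: "0 < p ^ n"
  using pr prime_gt_0_nat by simp

lemma zpow: "(0::'a) ^ (p ^ e) = 0"
  using ppos[of e] by (simp add: zero_power)

lemma pow_pow: "((x::'a) ^ (p ^ a)) ^ (p ^ b) = x ^ (p ^ (a + b))"
  by (simp only: power_add power_mult)

lemma pow_Suc: "((x::'a) ^ p) ^ (p ^ b) = x ^ (p ^ Suc b)"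
  by (simp only: power_Suc power_mult)

lemma L2:
  assumes x: "(x::'a) \<in> ideal_gen S"
  shows "x ^ (p ^ e) \<in> ideal_gen {s ^ (p ^ e) | s. s \<in> S}"
proof -
  let ?T = "ideal_gen {s ^ (p ^ e) | s. s \<in> S}"
  let ?I = "{x::'a. x ^ (p ^ e) \<in> ?T}"
  have T: "is_ideal ?T" by (rule ideal_gen_ideal)
  have "is_ideal ?I"
    unfolding is_ideal_def
  proof (intro conjI ballI allI)
    show "0 \<in> ?I" using zpow ideal_0[OF T] by simp
  next
    fix x y assume "x \<in> ?I" "y \<in> ?I"
    then show "x + y \<in> ?I" using fd ideal_add[OF T] by simp
  next
    fix r x assume "x \<in> ?I"
    then show "r * x \<in> ?I" using ideal_mult[OF T] by (simp add: power_mult_distrib)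
  qed
  moreover have "S \<subseteq> ?I"
  proof
    fix s assume "s \<in> S"
    then have "s ^ (p ^ e) \<in> {s ^ (p ^ e) | s. s \<in> S}" by blast
    then show "s \<in> ?I" by (simp add: subsetD[OF ideal_gen_sub])
  qed
  ultimately have "ideal_gen S \<subseteq> ?I" by (rule ideal_gen_least)
  from subsetD[OF this x] show ?thesis by simp
qed

lemma L3: "frob_pow (frob_pow a (p ^ m)) (p ^ n) = frob_pow (a::'a set) (p ^ (m + n))"
proof
  have sub: "ideal_gen {t ^ (p ^ n) | t. t \<in> {s ^ (p ^ m) | s. s \<in> a}} \<subseteq> frob_pow a (p ^ (m + n))"
  proof (rule ideal_gen_least[OF frob_pow_ideal], clarify)
    fix s assume "s \<in> a"
    then have "s ^ p ^ (m + n) \<in> frob_pow a (p ^ (m + n))" by (rule frob_pow_gen)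
    moreover have "(s ^ p ^ m) ^ p ^ n = s ^ p ^ (m + n)" by (rule pow_pow)
    ultimately show "(s ^ p ^ m) ^ p ^ n \<in> frob_pow a (p ^ (m + n))" by simp
  qed
  show "frob_pow (frob_pow a (p ^ m)) (p ^ n) \<subseteq> frob_pow a (p ^ (m + n))"
    unfolding frob_pow_def[of "frob_pow a (p ^ m)"]
  proof (rule ideal_gen_least[OF frob_pow_ideal], clarify)
    fix t assume "t \<in> frob_pow a (p ^ m)"
    then have "t \<in> ideal_gen {s ^ (p ^ m) | s. s \<in> a}" by (simp add: frob_pow_def)
    from subsetD[OF sub L2[OF this, of n]] show "t ^ p ^ n \<in> frob_pow a (p ^ (m + n))" .
  qed
  show "frob_pow a (p ^ (m + n)) \<subseteq> frob_pow (frob_pow a (p ^ m)) (p ^ n)"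
    unfolding frob_pow_def[of a "p ^ (m + n)"]
  proof (rule ideal_gen_least[OF frob_pow_ideal], clarify)
    fix s assume "s \<in> a"
    then have "s ^ p ^ m \<in> frob_pow a (p ^ m)" by (rule frob_pow_gen)
    then have "(s ^ p ^ m) ^ p ^ n \<in> frob_pow (frob_pow a (p ^ m)) (p ^ n)" by (rule frob_pow_gen)
    moreover have "(s ^ p ^ m) ^ p ^ n = s ^ p ^ (m + n)" by (rule pow_pow)
    ultimately show "s ^ p ^ (m + n) \<in> frob_pow (frob_pow a (p ^ m)) (p ^ n)" by simp
  qed
qed

lemma Jc_eq: "Jc p a m = {x::'a. \<exists>e. x ^ (p ^ e) \<in> frob_pow a (p ^ (m + e))}"
  unfolding Jc_def frob_closure_def using L3 by simp

lemma J_mono_e: "(x::'a) ^ (p ^ e) \<in> frob_pow a (p ^ (m + e)) \<Longrightarrow>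
    x ^ (p ^ (e + k)) \<in> frob_pow a (p ^ (m + (e + k)))"
proof -
  assume h: "x ^ (p ^ e) \<in> frob_pow a (p ^ (m + e))"
  have "(x ^ (p ^ e)) ^ (p ^ k) \<in> frob_pow a (p ^ (m + e + k))"
    using frob_pow_gen[OF h, of "p ^ k"] L3[of a "m + e" k] by simp
  moreover have "(x ^ (p ^ e)) ^ (p ^ k) = x ^ (p ^ (e + k))" by (rule pow_pow)
  moreover have "m + e + k = m + (e + k)" by simp
  ultimately show ?thesis by simp
qed

lemma J_ideal: "is_ideal (Jc p (a::'a set) m)"
  unfolding is_ideal_def Jc_eq
proof (intro conjI ballI allI)
  show "0 \<in> {x::'a. \<exists>e. x ^ (p ^ e) \<in> frob_pow a (p ^ (m + e))}"
    using zpow[of 0] ideal_0[OF frob_pow_ideal] by (metis (mono_tags, lifting) mem_Collect_eq)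
next
  fix x y assume "x \<in> {x::'a. \<exists>e. x ^ (p ^ e) \<in> frob_pow a (p ^ (m + e))}"
    "y \<in> {x::'a. \<exists>e. x ^ (p ^ e) \<in> frob_pow a (p ^ (m + e))}"
  then obtain e1 e2 where e1: "x ^ (p ^ e1) \<in> frob_pow a (p ^ (m + e1))"
    and e2: "y ^ (p ^ e2) \<in> frob_pow a (p ^ (m + e2))" by auto
  have "x ^ (p ^ (e1 + e2)) \<in> frob_pow a (p ^ (m + (e1 + e2)))" using J_mono_e[OF e1] .
  moreover have "y ^ (p ^ (e2 + e1)) \<in> frob_pow a (p ^ (m + (e2 + e1)))" using J_mono_e[OF e2] .
  ultimately have "(x + y) ^ (p ^ (e1 + e2)) \<in> frob_pow a (p ^ (m + (e1 + e2)))"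
    using fd ideal_add[OF frob_pow_ideal] by (simp add: add.commute)
  then show "x + y \<in> {x::'a. \<exists>e. x ^ (p ^ e) \<in> frob_pow a (p ^ (m + e))}" by blast
next
  fix r x assume "x \<in> {x::'a. \<exists>e. x ^ (p ^ e) \<in> frob_pow a (p ^ (m + e))}"
  then obtain e where e: "x ^ (p ^ e) \<in> frob_pow a (p ^ (m + e))" by blast
  have "(r * x) ^ (p ^ e) \<in> frob_pow a (p ^ (m + e))"
    using ideal_mult[OF frob_pow_ideal e, of "r ^ (p ^ e)"] by (simp add: power_mult_distrib)
  then show "r * x \<in> {x::'a. \<exists>e. x ^ (p ^ e) \<in> frob_pow a (p ^ (m + e))}" by blast
qed

lemma J_tf: "(x::'a) ^ p \<in> Jc p a (Suc m) \<Longrightarrow> x \<in> Jc p a m"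
  unfolding Jc_eq
proof clarify
  fix e assume "(x ^ p) ^ (p ^ e) \<in> frob_pow a (p ^ (Suc m + e))"
  then have "x ^ (p ^ Suc e) \<in> frob_pow a (p ^ (m + Suc e))"
    by (simp only: pow_Suc add_Suc add_Suc_right)
  then show "\<exists>e. x ^ (p ^ e) \<in> frob_pow a (p ^ (m + e))" by blast
qed

lemma J_pow: "(x::'a) \<in> Jc p a m \<Longrightarrow> x ^ (p ^ k) \<in> Jc p a (m + k)"
  unfolding Jc_eq
proof clarify
  fix e assume "x ^ (p ^ e) \<in> frob_pow a (p ^ (m + e))"
  from J_mono_e[OF this, of k]
  have h: "x ^ (p ^ (e + k)) \<in> frob_pow a (p ^ (m + (e + k)))" .
  have e1: "(x ^ (p ^ k)) ^ (p ^ e) = x ^ (p ^ (e + k))"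
    using pow_pow[of x k e] by (simp only: add.commute)
  have e2: "m + k + e = m + (e + k)" by simp
  have "(x ^ (p ^ k)) ^ (p ^ e) \<in> frob_pow a (p ^ (m + k + e))"
    unfolding e1 e2 by (rule h)
  then show "\<exists>e. (x ^ (p ^ k)) ^ (p ^ e) \<in> frob_pow a (p ^ (m + k + e))" by blast
qed

lemma J_sub_tight: "(x::'a) \<in> Jc p a m \<Longrightarrow> x \<in> tight_closure p (frob_pow a (p ^ m))"
  unfolding Jc_eq tight_closure_def
proof clarify
  fix e assume e: "x ^ (p ^ e) \<in> frob_pow a (p ^ (m + e))"
  have "\<forall>n\<ge>e. 1 * x ^ p ^ n \<in> frob_pow (frob_pow a (p ^ m)) (p ^ n)"
  proof clarify
    fix n assume "e \<le> n"
    then obtain k where "n = e + k" by (metis le_add_diff_inverse)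
    then show "1 * x ^ p ^ n \<in> frob_pow (frob_pow a (p ^ m)) (p ^ n)"
      using J_mono_e[OF e, of k] L3 by simp
  qed
  then show "\<exists>c\<in>R_circ. \<exists>N. \<forall>n\<ge>N. c * x ^ p ^ n \<in> frob_pow (frob_pow a (p ^ m)) (p ^ n)"
    using one_Rcirc by blast
qed


lemma TE1:
  assumes wt: "weak_test_element p w0 (c::'a)"
    and s: "s \<in> tight_closure p (frob_pow a (p ^ n))"
  shows "c * s ^ (p ^ k) \<in> Jc p a (n + k)"
proof -
  have bi: "is_ideal (frob_pow a (p ^ n))" by (rule frob_pow_ideal)
  have "\<forall>j\<ge>w0. c * s ^ (p ^ j) \<in> frob_pow (frob_pow a (p ^ n)) (p ^ j)"
    using wt s bi unfolding weak_test_element_def by blast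
  then have h: "c * s ^ (p ^ (k + w0)) \<in> frob_pow a (p ^ (n + (k + w0)))"
    using L3 by simp
  obtain q where q: "p ^ w0 = Suc q" using ppos[of w0] gr0_conv_Suc by blast
  have "(c * s ^ (p ^ k)) ^ (p ^ w0) = c ^ (p ^ w0) * s ^ (p ^ (k + w0))"
    by (simp only: power_mult_distrib pow_pow)
  also have "\<dots> = c ^ q * (c * s ^ (p ^ (k + w0)))"
    by (simp only: q power_Suc2 mult.assoc)
  also have "\<dots> \<in> frob_pow a (p ^ (n + (k + w0)))"
    using ideal_mult[OF frob_pow_ideal h] .
  finally have "(c * s ^ (p ^ k)) ^ (p ^ w0) \<in> frob_pow a (p ^ (n + k + w0))"
    by (simp add: add.assoc)
  then show ?thesis unfolding Jc_eq by blast
qed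

lemma TE2:
  assumes wt: "weak_test_element p w0 (c::'a)"
    and d: "(d::'a) \<in> R_circ"
    and h: "\<And>k. d * s ^ (p ^ k) \<in> Jc p a (n + k)"
  shows "s \<in> tight_closure p (frob_pow a (p ^ n))"
proof -
  have cR: "c \<in> R_circ" using wt unfolding weak_test_element_def by blast
  have key: "c * d ^ (p ^ w0) * s ^ (p ^ (k + w0)) \<in> frob_pow (frob_pow a (p ^ n)) (p ^ (k + w0))" for k
  proof -
    have "d * s ^ (p ^ k) \<in> tight_closure p (frob_pow a (p ^ (n + k)))"
      using J_sub_tight[OF h[of k]] .
    then have "\<forall>j\<ge>w0. c * (d * s ^ (p ^ k)) ^ (p ^ j) \<in> frob_pow (frob_pow a (p ^ (n + k))) (p ^ j)"
      using wt frob_pow_ideal unfolding weak_test_element_def by blast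
    then have "c * (d * s ^ (p ^ k)) ^ (p ^ w0) \<in> frob_pow (frob_pow a (p ^ (n + k))) (p ^ w0)"
      by blast
    moreover have "c * (d * s ^ (p ^ k)) ^ (p ^ w0) = c * d ^ (p ^ w0) * s ^ (p ^ (k + w0))"
      by (simp only: power_mult_distrib pow_pow mult.assoc)
    moreover have "frob_pow (frob_pow a (p ^ (n + k))) (p ^ w0) = frob_pow (frob_pow a (p ^ n)) (p ^ (k + w0))"
      using L3 by (simp add: add.assoc)
    ultimately show ?thesis by simp
  qed
  have "c * d ^ (p ^ w0) \<in> R_circ" using cR d Rcirc_mult Rcirc_pow by blast
  moreover have "\<forall>j\<ge>w0. c * d ^ (p ^ w0) * s ^ (p ^ j) \<in> frob_pow (frob_pow a (p ^ n)) (p ^ j)"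
  proof clarify
    fix j assume "w0 \<le> j"
    then have "j = (j - w0) + w0" by simp
    then show "c * d ^ (p ^ w0) * s ^ (p ^ j) \<in> frob_pow (frob_pow a (p ^ n)) (p ^ j)"
      using key[of "j - w0"] by metis
  qed
  ultimately show ?thesis unfolding tight_closure_def by blast
qed

section \<open>The module G\<close>

lemma Kdir:
  assumes "Gact p r k g = Gzero p" "is_ideal a" "k \<le> m" "s \<in> g a (m - k)"
  shows "r * (s::'a) ^ (p ^ k) \<in> Jc p a m"
proof -
  have "Gact p r k g a m = Jc p a m" using assms(1) unfolding Gzero_def by metis
  then have "{r * s ^ (p ^ k) + j | s j. s \<in> g a (m - k) \<and> j \<in> Jc p a m} = Jc p a m"
    using assms(2,3) unfolding Gact_def by simp
  moreover have "r * s ^ (p ^ k) + 0 \<in> {r * s ^ (p ^ k) + j | s j. s \<in> g a (m - k) \<and> j \<in> Jc p a m}"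
    using assms(4) ideal_0[OF J_ideal] by blast
  ultimately show ?thesis by simp
qed

lemma coset_nonempty: "is_ideal I \<Longrightarrow> r \<in> coset r I"
  unfolding coset_def using ideal_0 by force

lemma Gcar_nonempty:
  assumes "g \<in> Gcar p" "is_ideal a"
  shows "\<exists>s. s \<in> (g a n :: 'a set)"
proof -
  obtain r where "g a n = coset r (Jc p a n)" using assms unfolding Gcar_def by blast
  then show ?thesis using coset_nonempty[OF J_ideal] by blast
qed

lemma Kconv:
  assumes g: "g \<in> Gcar p"
    and h: "\<And>a m s. is_ideal a \<Longrightarrow> k \<le> m \<Longrightarrow> s \<in> g a (m - k) \<Longrightarrow> r * (s::'a) ^ (p ^ k) \<in> Jc p a m"
  shows "Gact p r k g = Gzero p"
proof (rule ext, rule ext)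
  fix a m
  show "Gact p r k g a m = Gzero p a m"
  proof (cases "is_ideal a \<and> k \<le> m")
    case False
    then show ?thesis unfolding Gact_def Gzero_def by auto
  next
    case True
    have JI: "is_ideal (Jc p a m)" by (rule J_ideal)
    obtain s0 where s0: "s0 \<in> g a (m - k)" using Gcar_nonempty[OF g] True by blast
    have "{r * s ^ (p ^ k) + j | s j. s \<in> g a (m - k) \<and> j \<in> Jc p a m} = Jc p a m"
    proof
      show "{r * s ^ (p ^ k) + j | s j. s \<in> g a (m - k) \<and> j \<in> Jc p a m} \<subseteq> Jc p a m"
        using h True ideal_add[OF JI] by blast
    next
      show "Jc p a m \<subseteq> {r * s ^ (p ^ k) + j | s j. s \<in> g a (m - k) \<and> j \<in> Jc p a m}"
      proof
        fix j assume j: "j \<in> Jc p a m"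
        have "j - r * s0 ^ (p ^ k) \<in> Jc p a m"
          using ideal_diff[OF JI j h[OF _ _ s0]] True by blast
        moreover have "j = r * s0 ^ (p ^ k) + (j - r * s0 ^ (p ^ k))" by simp
        ultimately show "j \<in> {r * s ^ (p ^ k) + j | s j. s \<in> g a (m - k) \<and> j \<in> Jc p a m}"
          using s0 by blast
      qed
    qed
    then show ?thesis using True unfolding Gact_def Gzero_def by simp
  qed
qed

lemma coset_J: "is_ideal I \<Longrightarrow> x \<in> I \<Longrightarrow> coset x I = I"
  unfolding coset_def
proof
  assume I: "is_ideal I" and x: "x \<in> I"
  show "(+) x ` I \<subseteq> I" using ideal_add[OF I x] by blast
  show "I \<subseteq> (+) x ` I"
  proof
    fix y assume "y \<in> I"
    then have "y - x \<in> I" using ideal_diff[OF I _ x] by blast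
    then show "y \<in> (+) x ` I" by (metis add_diff_cancel_left' diff_add_cancel image_eqI add.commute)
  qed
qed

lemma Gzero_Gcar: "Gzero p \<in> (Gcar p :: ('a set \<Rightarrow> nat \<Rightarrow> 'a set) set)"
  unfolding Gcar_def Gzero_def
  using coset_J[OF J_ideal ideal_0[OF J_ideal]] by auto

lemma add_JJ: "{s + t | s t. s \<in> Jc p (a::'a set) n \<and> t \<in> Jc p a n} = Jc p a n"
proof
  show "{s + t | s t. s \<in> Jc p (a::'a set) n \<and> t \<in> Jc p a n} \<subseteq> Jc p a n"
    using ideal_add[OF J_ideal] by blast
  show "Jc p a n \<subseteq> {s + t | s t. s \<in> Jc p (a::'a set) n \<and> t \<in> Jc p a n}"
    using ideal_0[OF J_ideal] by force
qed

lemma Gadd_Gcar: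
  assumes g: "g \<in> Gcar p" and h: "h \<in> (Gcar p :: ('a set \<Rightarrow> nat \<Rightarrow> 'a set) set)"
  shows "Gadd g h \<in> Gcar p"
proof -
  have comp: "\<exists>r. Gadd g h a n = coset r (Jc p a n)" if a: "is_ideal a" for a n
  proof -
    obtain r where r: "g a n = coset r (Jc p a n)" using g a unfolding Gcar_def by blast
    obtain t where t: "h a n = coset t (Jc p a n)" using h a unfolding Gcar_def by blast
    have JI: "is_ideal (Jc p a n)" by (rule J_ideal)
    have "Gadd g h a n = coset (r + t) (Jc p a n)"
      unfolding Gadd_def r t coset_def
    proof safe
      fix i i' assume "i \<in> Jc p a n" "i' \<in> Jc p a n"
      then show "r + i + (t + i') \<in> (+) (r + t) ` Jc p a n"
        using ideal_add[OF JI] by (metis (no_types, lifting) add.assoc add.left_commute image_eqI)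
    next
      fix i assume "i \<in> Jc p a n"
      then show "\<exists>s ta. r + t + i = s + ta \<and> s \<in> (+) r ` Jc p a n \<and> ta \<in> (+) t ` Jc p a n"
        using ideal_0[OF JI] by (intro exI[of _ "r + i"] exI[of _ "t + 0"]) (auto simp: add_ac)
    qed
    then show ?thesis by blast
  qed
  have nonid: "Gadd g h a n = Jc p a n" if "\<not> is_ideal a" for a n
    using g h that add_JJ unfolding Gcar_def Gadd_def by auto
  have zz: "Gadd g h a n = Jc p a n" if "g a n = Jc p a n" "h a n = Jc p a n" for a n
    using add_JJ[of a n] that unfolding Gadd_def by simp
  have "{(a, n). Gadd g h a n \<noteq> Jc p a n} \<subseteq> {(a, n). g a n \<noteq> Jc p a n} \<union> {(a, n). h a n \<noteq> Jc p a n}"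
    using zz by auto
  moreover have "finite ({(a, n). g a n \<noteq> Jc p a n} \<union> {(a, n). h a n \<noteq> Jc p a n})"
    using g h unfolding Gcar_def by auto
  ultimately have "finite {(a, n). Gadd g h a n \<noteq> Jc p a n}" by (rule finite_subset)
  then show ?thesis using comp nonid unfolding Gcar_def by blast
qed

lemma Gact_comp:
  assumes g: "g \<in> Gcar p" and a: "is_ideal a" and km: "k \<le> m"
    and r0: "g a (m - k) = coset r0 (Jc p a (m - k))"
  shows "Gact p r k g a m = coset (r * (r0::'a) ^ (p ^ k)) (Jc p a m)"
proof -
  have JI: "is_ideal (Jc p a m)" by (rule J_ideal)
  have mk: "m - k + k = m" using km by simp
  have "{r * s ^ (p ^ k) + j | s j. s \<in> g a (m - k) \<and> j \<in> Jc p a m} = coset (r * r0 ^ (p ^ k)) (Jc p a m)"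
    unfolding r0 coset_def
  proof safe
    fix i j assume i: "i \<in> Jc p a (m - k)" and j: "j \<in> Jc p a m"
    have "i ^ (p ^ k) \<in> Jc p a m" using J_pow[OF i, of k] mk by simp
    then have "r * i ^ (p ^ k) + j \<in> Jc p a m" using ideal_add[OF JI ideal_mult[OF JI] j] by blast
    moreover have "r * (r0 + i) ^ p ^ k + j = r * r0 ^ (p ^ k) + (r * i ^ (p ^ k) + j)"
      by (simp add: fd distrib_left add_ac)
    ultimately show "r * (r0 + i) ^ p ^ k + j \<in> (+) (r * r0 ^ p ^ k) ` Jc p a m" by blast
  next
    fix j assume "j \<in> Jc p a m"
    then show "\<exists>s ja. r * r0 ^ p ^ k + j = r * s ^ p ^ k + ja \<and> s \<in> (+) r0 ` Jc p a (m - k) \<and> ja \<in> Jc p a m"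
      using ideal_0[OF J_ideal, of a "m - k"] by (intro exI[of _ "r0 + 0"] exI[of _ j]) auto
  qed
  then show ?thesis using a km unfolding Gact_def by simp
qed

lemma Gact_Gcar:
  assumes g: "g \<in> (Gcar p :: ('a set \<Rightarrow> nat \<Rightarrow> 'a set) set)"
  shows "Gact p r k g \<in> Gcar p"
proof -
  have comp: "\<exists>t. Gact p r k g a m = coset t (Jc p a m)" if a: "is_ideal a" for a m
  proof (cases "k \<le> m")
    case True
    obtain r0 where "g a (m - k) = coset r0 (Jc p a (m - k))" using g a unfolding Gcar_def by blast
    then show ?thesis using Gact_comp[OF g a True] by blast
  next
    case False
    then have "Gact p r k g a m = coset 0 (Jc p a m)"
      unfolding Gact_def using coset_J[OF J_ideal ideal_0[OF J_ideal]] by simp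
    then show ?thesis by blast
  qed
  have nonid: "Gact p r k g a m = Jc p a m" if "\<not> is_ideal a" for a m
    using that unfolding Gact_def by simp
  have "{(a, m). Gact p r k g a m \<noteq> Jc p a m} \<subseteq> (\<lambda>(a, n). (a, n + k)) ` {(a, n). g a n \<noteq> Jc p a n}"
  proof clarify
    fix a m assume ne: "Gact p r k g a m \<noteq> Jc p a m"
    then have a: "is_ideal a" and km: "k \<le> m" unfolding Gact_def by (auto split: if_splits)
    have "g a (m - k) \<noteq> Jc p a (m - k)"
    proof
      assume "g a (m - k) = Jc p a (m - k)"
      then have "g a (m - k) = coset 0 (Jc p a (m - k))"
        using coset_J[OF J_ideal ideal_0[OF J_ideal]] by simp
      from Gact_comp[OF g a km this, of r] have "Gact p r k g a m = coset 0 (Jc p a m)"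
        using zpow by simp
      then show False using ne coset_J[OF J_ideal ideal_0[OF J_ideal]] by simp
    qed
    moreover have "m = m - k + k" using km by simp
    ultimately show "(a, m) \<in> (\<lambda>(a, n). (a, n + k)) ` {(a, n). g a n \<noteq> Jc p a n}"
      by (intro image_eqI[of _ _ "(a, m - k)"]) auto
  qed
  moreover have "finite {(a, n). g a n \<noteq> Jc p a n}" using g unfolding Gcar_def by blast
  ultimately have "finite {(a, m). Gact p r k g a m \<noteq> Jc p a m}"
    using finite_subset by blast
  then show ?thesis using comp nonid unfolding Gcar_def by blast
qed


lemma Gann_Gzero: "Gzero p \<in> Gann p (\<lambda>n. (B::'a set))"
  unfolding Gann_def
proof (safe intro!: Gzero_Gcar)
  fix n r assume "r \<in> B"
  show "Gact p r n (Gzero p) = (Gzero p :: 'a set \<Rightarrow> nat \<Rightarrow> 'a set)"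
  proof (rule Kconv[OF Gzero_Gcar])
    fix a m s assume "is_ideal (a::'a set)" "n \<le> m" "s \<in> Gzero p a (m - n)"
    then have "s ^ (p ^ n) \<in> Jc p a m" using J_pow[of s a "m - n" n] unfolding Gzero_def by simp
    then show "r * s ^ (p ^ n) \<in> Jc p a m" using ideal_mult[OF J_ideal] by blast
  qed
qed

lemma Gann_Gadd:
  assumes g: "g \<in> Gann p (\<lambda>n. (B::'a set))" and h: "h \<in> Gann p (\<lambda>n. B)"
  shows "Gadd g h \<in> Gann p (\<lambda>n. B)"
proof -
  have gc: "g \<in> Gcar p" and hc: "h \<in> Gcar p" using g h unfolding Gann_def by auto
  have "Gact p r n (Gadd g h) = Gzero p" if r: "r \<in> B" for r n
  proof (rule Kconv[OF Gadd_Gcar[OF gc hc]])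
    fix a m s assume a: "is_ideal (a::'a set)" and nm: "n \<le> m" and s: "s \<in> Gadd g h a (m - n)"
    then obtain s1 s2 where s12: "s = s1 + s2" "s1 \<in> g a (m - n)" "s2 \<in> h a (m - n)"
      unfolding Gadd_def by blast
    have "Gact p r n g = Gzero p" "Gact p r n h = Gzero p" using g h r unfolding Gann_def by auto
    then have "r * s1 ^ (p ^ n) \<in> Jc p a m" "r * s2 ^ (p ^ n) \<in> Jc p a m"
      using Kdir a nm s12 by blast+
    then show "r * s ^ (p ^ n) \<in> Jc p a m"
      using ideal_add[OF J_ideal] by (simp add: s12 fd distrib_left)
  qed
  then show ?thesis using Gadd_Gcar[OF gc hc] unfolding Gann_def by blast
qed

lemma Gann_Gact:
  assumes g: "g \<in> Gann p (\<lambda>n. (B::'a set))"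
  shows "Gact p r k g \<in> Gann p (\<lambda>n. B)"
proof -
  have gc: "g \<in> Gcar p" using g unfolding Gann_def by auto
  have "Gact p r' n (Gact p r k g) = Gzero p" if r': "r' \<in> B" for r' n
  proof (rule Kconv[OF Gact_Gcar[OF gc]])
    fix a m s assume a: "is_ideal (a::'a set)" and nm: "n \<le> m" and s: "s \<in> Gact p r k g a (m - n)"
    show "r' * s ^ (p ^ n) \<in> Jc p a m"
    proof (cases "k \<le> m - n")
      case True
      then obtain s1 j where sj: "s = r * s1 ^ (p ^ k) + j" "s1 \<in> g a (m - n - k)" "j \<in> Jc p a (m - n)"
        using s a unfolding Gact_def by auto
      have "Gact p r' (k + n) g = Gzero p" using g r' unfolding Gann_def by auto
      moreover have "m - n - k = m - (k + n)" by simp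
      ultimately have 1: "r' * s1 ^ (p ^ (k + n)) \<in> Jc p a m"
        using Kdir[of r' "k + n" g a m s1] a nm True sj(2) by simp
      have 2: "j ^ (p ^ n) \<in> Jc p a m" using J_pow[OF sj(3), of n] nm by simp
      have "r' * s ^ (p ^ n) = r ^ (p ^ n) * (r' * s1 ^ (p ^ (k + n))) + r' * j ^ (p ^ n)"
        by (simp only: sj(1) fd distrib_left power_mult_distrib pow_pow) (simp only: mult_ac)
      then show ?thesis using ideal_add[OF J_ideal ideal_mult[OF J_ideal 1] ideal_mult[OF J_ideal 2]]
        by simp
    next
      case False
      then have "s \<in> Jc p a (m - n)" using s unfolding Gact_def by simp
      then have "s ^ (p ^ n) \<in> Jc p a m" using J_pow[of s a "m - n" n] nm by simp
      then show ?thesis using ideal_mult[OF J_ideal] by blast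
    qed
  qed
  then show ?thesis using Gact_Gcar[OF gc] unfolding Gann_def by blast
qed

lemma Gann_submodule: "Gsubmodule p (Gann p (\<lambda>n. (B::'a set)))"
  unfolding Gsubmodule_def using Gann_Gzero Gann_Gadd Gann_Gact
  by (auto simp: Gann_def)

lemma U_eq:
  assumes wt: "weak_test_element p w0 (c::'a)"
  shows "Usub p = Gann p (\<lambda>n. ideal_gen {c})"
proof
  show "Usub p \<subseteq> Gann p (\<lambda>n. ideal_gen {c})"
  proof
    fix g :: "'a set \<Rightarrow> nat \<Rightarrow> 'a set" assume g: "g \<in> Usub p"
    have gc: "g \<in> Gcar p" using g unfolding Usub_def by blast
    have "Gact p r n g = Gzero p" if r: "r \<in> ideal_gen {c}" for r n
    proof (rule Kconv[OF gc])
      fix a m s assume a: "is_ideal (a::'a set)" and nm: "n \<le> m" and s: "s \<in> g a (m - n)"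
      have "s \<in> tight_closure p (frob_pow a (p ^ (m - n)))" using g a s unfolding Usub_def by blast
      from TE1[OF wt this, of n] have "c * s ^ (p ^ n) \<in> Jc p a m" using nm by simp
      moreover obtain t where "r = t * c" using r ideal_gen_single by blast
      ultimately show "r * s ^ (p ^ n) \<in> Jc p a m"
        using ideal_mult[OF J_ideal] by (metis mult.assoc)
    qed
    then show "g \<in> Gann p (\<lambda>n. ideal_gen {c})" using gc unfolding Gann_def by blast
  qed
next
  show "Gann p (\<lambda>n. ideal_gen {c}) \<subseteq> Usub p"
  proof
    fix g :: "'a set \<Rightarrow> nat \<Rightarrow> 'a set" assume g: "g \<in> Gann p (\<lambda>n. ideal_gen {c})"
    have gc: "g \<in> Gcar p" using g unfolding Gann_def by blast
    have cR: "c \<in> R_circ" using wt unfolding weak_test_element_def by blast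
    have "s \<in> tight_closure p (frob_pow a (p ^ n))" if a: "is_ideal a" and s: "s \<in> g a n" for a n s
    proof (rule TE2[OF wt cR])
      fix k
      have "Gact p c k g = Gzero p" using g ideal_gen_sub[of "{c}"] unfolding Gann_def by blast
      then show "c * s ^ (p ^ k) \<in> Jc p a (n + k)" using Kdir[of c k g a "n + k" s] a s by simp
    qed
    then show "g \<in> Usub p" using gc unfolding Usub_def by blast
  qed
qed

lemma grann_step:
  assumes N: "Gsubmodule p (N :: ('a set \<Rightarrow> nat \<Rightarrow> 'a set) set)"
  shows "grann_comp p N (Suc n) = grann_comp p N n"
proof
  have NG: "N \<subseteq> Gcar p" using N unfolding Gsubmodule_def by blast
  show "grann_comp p N (Suc n) \<subseteq> grann_comp p N n"
  proof
    fix r assume r: "r \<in> grann_comp p N (Suc n)"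
    have "Gact p r n g = Gzero p" if g: "g \<in> N" for g
    proof (rule Kconv)
      show "g \<in> Gcar p" using g N unfolding Gsubmodule_def by blast
    next
      fix a m s assume a: "is_ideal (a::'a set)" and nm: "n \<le> m" and s: "s \<in> g a (m - n)"
      have "Gact p r (Suc n) g = Gzero p" using r g unfolding grann_comp_def by blast
      then have "r * s ^ (p ^ Suc n) \<in> Jc p a (Suc m)"
        using Kdir[of r "Suc n" g a "Suc m" s] a nm s by simp
      then have "r ^ (p - 1) * (r * s ^ (p ^ Suc n)) \<in> Jc p a (Suc m)"
        using ideal_mult[OF J_ideal] by blast
      moreover have "r ^ (p - 1) * (r * s ^ (p ^ Suc n)) = (r * s ^ (p ^ n)) ^ p"
      proof -
        have "p = Suc (p - 1)" using ppos[of 1] by simp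
        then have rp: "r ^ p = r ^ (p - 1) * r" by (metis power_Suc2)
        have e1: "(s ^ p ^ n) ^ p = s ^ p ^ Suc n" by (simp only: power_mult[symmetric] power_Suc2)
        show ?thesis by (simp only: power_mult_distrib e1 rp mult.assoc)
      qed
      ultimately show "r * s ^ (p ^ n) \<in> Jc p a m" using J_tf by simp
    qed
    then show "r \<in> grann_comp p N n" unfolding grann_comp_def by blast
  qed
next
  show "grann_comp p N n \<subseteq> grann_comp p N (Suc n)"
  proof
    fix r assume r: "r \<in> grann_comp p N n"
    have "Gact p r (Suc n) g = Gzero p" if g: "g \<in> N" for g
    proof (rule Kconv)
      show "g \<in> Gcar p" using g N unfolding Gsubmodule_def by blast
    next
      fix a m s assume a: "is_ideal (a::'a set)" and nm: "Suc n \<le> m" and s: "s \<in> g a (m - Suc n)"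
      have hN: "Gact p 1 1 g \<in> N" using N g unfolding Gsubmodule_def by blast
      have "s ^ p \<in> Gact p 1 1 g a (m - n)"
      proof -
        have "m - n - 1 = m - Suc n" by simp
        then have s': "s \<in> g a (m - n - 1)" using s by simp
        have j0: "(0::'a) \<in> Jc p a (m - n)" using ideal_0[OF J_ideal] .
        have "1 * s ^ (p ^ 1) + 0 \<in> {1 * s ^ (p ^ 1) + j | s j. s \<in> g a (m - n - 1) \<and> j \<in> Jc p a (m - n)}"
          using s' j0 by blast
        moreover have "1 \<le> m - n" using nm by simp
        ultimately show ?thesis using a unfolding Gact_def by simp
      qed
      moreover have "Gact p r n (Gact p 1 1 g) = Gzero p" using r hN unfolding grann_comp_def by blast
      ultimately have "r * (s ^ p) ^ (p ^ n) \<in> Jc p a m" using Kdir a nm by simp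
      then show "r * s ^ (p ^ Suc n) \<in> Jc p a m" by (simp only: pow_Suc)
    qed
    then show "r \<in> grann_comp p N (Suc n)" unfolding grann_comp_def by blast
  qed
qed

lemma grann_const:
  assumes N: "Gsubmodule p (N :: ('a set \<Rightarrow> nat \<Rightarrow> 'a set) set)"
  shows "grann_comp p N n = grann_comp p N 0"
  by (induction n) (simp_all add: grann_step[OF N])

lemma grann_ideal:
  assumes N: "N \<subseteq> (Gcar p :: ('a set \<Rightarrow> nat \<Rightarrow> 'a set) set)"
  shows "is_ideal (grann_comp p N n)"
  unfolding is_ideal_def
proof (intro conjI ballI allI)
  have "Gact p 0 n g = Gzero p" if g: "g \<in> N" for g
  proof (rule Kconv)
    show "g \<in> Gcar p" using N g by blast
  next
    fix a :: "'a set" and m s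
    show "0 * s ^ p ^ n \<in> Jc p a m" using ideal_0[OF J_ideal, of a m] by simp
  qed
  then show "0 \<in> grann_comp p N n" unfolding grann_comp_def by blast
next
  fix x y assume x: "x \<in> grann_comp p N n" and y: "y \<in> grann_comp p N n"
  have "Gact p (x + y) n g = Gzero p" if g: "g \<in> N" for g
  proof (rule Kconv)
    show "g \<in> Gcar p" using N g by blast
  next
    fix a :: "'a set" and m s
    assume "is_ideal a" "n \<le> m" "s \<in> g a (m - n)"
    moreover have "Gact p x n g = Gzero p" "Gact p y n g = Gzero p"
      using x y g unfolding grann_comp_def by blast+
    ultimately have "x * s ^ p ^ n \<in> Jc p a m" "y * s ^ p ^ n \<in> Jc p a m"
      using Kdir by blast+
    then show "(x + y) * s ^ p ^ n \<in> Jc p a m" using ideal_add[OF J_ideal] by (simp add: distrib_right)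
  qed
  then show "x + y \<in> grann_comp p N n" unfolding grann_comp_def by blast
next
  fix r x assume x: "x \<in> grann_comp p N n"
  have "Gact p (r * x) n g = Gzero p" if g: "g \<in> N" for g
  proof (rule Kconv)
    show "g \<in> Gcar p" using N g by blast
  next
    fix a :: "'a set" and m s
    assume "is_ideal a" "n \<le> m" "s \<in> g a (m - n)"
    moreover have "Gact p x n g = Gzero p" using x g unfolding grann_comp_def by blast
    ultimately have "x * s ^ p ^ n \<in> Jc p a m" using Kdir by blast
    then show "r * x * s ^ p ^ n \<in> Jc p a m" using ideal_mult[OF J_ideal] by (simp add: mult.assoc)
  qed
  then show "r * x \<in> grann_comp p N n" unfolding grann_comp_def by blast
qed

lemma sub_U:
  assumes wt: "weak_test_element p w0 (c::'a)"
    and N: "N \<subseteq> (Gcar p :: ('a set \<Rightarrow> nat \<Rightarrow> 'a set) set)" and d: "(d::'a) \<in> R_circ" and dN: "\<And>n. d \<in> grann_comp p N n"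
  shows "N \<subseteq> Usub p"
proof
  fix g assume g: "g \<in> N"
  have "s \<in> tight_closure p (frob_pow a (p ^ n))" if a: "is_ideal a" and s: "s \<in> g a n" for a n s
  proof (rule TE2[OF wt d])
    fix k
    have "Gact p d k g = Gzero p" using dN g unfolding grann_comp_def by blast
    then show "d * s ^ (p ^ k) \<in> Jc p a (n + k)" using Kdir[of d k g a "n + k" s] a s by simp
  qed
  then show "g \<in> Usub p" using g N unfolding Usub_def by blast
qed

end

section \<open>Heights\<close>

lemma height_pos_if:
  assumes h: "\<And>P. is_prime_ideal P \<Longrightarrow> I \<subseteq> P \<Longrightarrow> \<exists>Q. is_prime_ideal Q \<and> Q \<subset> P"
  shows "0 < ideal_height (I::'a::comm_ring_1 set)"
proof -
  have "1 \<le> prime_height P" if P: "is_prime_ideal P" "I \<subseteq> P" for P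
  proof -
    obtain Q where Q: "is_prime_ideal Q" "Q \<subset> P" using h P by blast
    let ?C = "\<lambda>i::nat. if i = 0 then Q else P"
    have c1: "\<forall>i\<le>1. is_prime_ideal (?C i)"
    proof (intro allI impI)
      fix i :: nat assume "i \<le> 1"
      show "is_prime_ideal (?C i)" using Q(1) P(1) by (cases "i = 0") simp_all
    qed
    have c2: "\<forall>i<1. ?C i \<subset> ?C (Suc i)" using Q(2) by simp
    have c3: "?C 1 = P" by simp
    have ex: "\<exists>C::nat \<Rightarrow> 'a set. (\<forall>i\<le>1. is_prime_ideal (C i))
       \<and> (\<forall>i<1. C i \<subset> C (Suc i)) \<and> C 1 = P"
      using c1 c2 c3 by (intro exI[of _ ?C] conjI)
    have "enat 1 \<in> {enat n | n. \<exists>C::nat \<Rightarrow> 'a set. (\<forall>i\<le>n. is_prime_ideal (C i))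
       \<and> (\<forall>i<n. C i \<subset> C (Suc i)) \<and> C n = P}"
    proof -
      have "enat 1 = enat 1 \<and> (\<exists>C::nat \<Rightarrow> 'a set. (\<forall>i\<le>1. is_prime_ideal (C i))
       \<and> (\<forall>i<1. C i \<subset> C (Suc i)) \<and> C 1 = P)" using ex by (rule conjI[OF refl])
      then have "\<exists>n. enat 1 = enat n \<and> (\<exists>C::nat \<Rightarrow> 'a set. (\<forall>i\<le>n. is_prime_ideal (C i))
       \<and> (\<forall>i<n. C i \<subset> C (Suc i)) \<and> C n = P)" by (rule exI)
      then show ?thesis by (simp only: mem_Collect_eq)
    qed
    then have "enat 1 \<le> prime_height P" unfolding prime_height_def by (rule Sup_upper)
    then show ?thesis by (simp add: one_enat_def)
  qed
  then have "1 \<le> ideal_height I" unfolding ideal_height_def by (auto intro!: INF_greatest)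
  then show ?thesis by (metis less_le_trans zero_less_one)
qed

lemma minimal_height0:
  assumes P: "is_minimal_prime (P::'a::comm_ring_1 set)"
  shows "prime_height P = 0"
proof -
  have "x \<le> 0" if x: "x \<in> {enat n | n. \<exists>C::nat \<Rightarrow> 'a set. (\<forall>i\<le>n. is_prime_ideal (C i))
       \<and> (\<forall>i<n. C i \<subset> C (Suc i)) \<and> C n = P}" for x
  proof -
    obtain n C where x: "x = enat n" and C: "\<forall>i\<le>n. is_prime_ideal (C i)"
      "\<forall>i<n. C i \<subset> C (Suc i)" "C n = P" using x by blast
    have "n = 0"
    proof (rule ccontr)
      assume "n \<noteq> 0"
      then have "C (n - 1) \<subset> C n" "is_prime_ideal (C (n - 1))" using C
        by (metis Suc_pred' diff_less less_one not_gr0 zero_less_diff less_imp_le, simp)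
      then show False using P C(3) unfolding is_minimal_prime_def by blast
    qed
    then show ?thesis using x by (simp add: zero_enat_def)
  qed
  then have "prime_height P \<le> 0" unfolding prime_height_def by (rule Sup_least)
  then show ?thesis by simp
qed

lemma height_le: "is_prime_ideal P \<Longrightarrow> I \<subseteq> P \<Longrightarrow> ideal_height I \<le> prime_height P"
  unfolding ideal_height_def by (rule INF_lower) blast

section \<open>Noetherian rings\<close>

lemma chain_bound:
  assumes "finite S" "S \<subseteq> \<Union>(range f)" "\<And>i. f i \<subseteq> f (Suc i)"
  shows "\<exists>M. S \<subseteq> (f M :: 'a set)"
  using assms(1,2)
proof (induction S rule: finite_induct)
  case empty then show ?case by blast
next
  case (insert x F)
  then obtain M i where M: "F \<subseteq> f M" and i: "x \<in> f i" by blast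
  have "f M \<subseteq> f (max M i)" "f i \<subseteq> f (max M i)"
    using lift_Suc_mono_le[of f, OF assms(3)] by auto
  then show ?case using M i by blast
qed

lemma noeth_wf:
  assumes N: "noetherian TYPE('a::comm_ring_1)"
  shows "wf {(J, I::'a set). is_ideal I \<and> is_ideal J \<and> I \<subset> J}"
  unfolding wf_iff_no_infinite_down_chain
proof
  assume "\<exists>f. \<forall>i. (f (Suc i), f i) \<in> {(J, I::'a set). is_ideal I \<and> is_ideal J \<and> I \<subset> J}"
  then obtain f where f: "\<And>i. is_ideal (f i :: 'a set)" "\<And>i. f i \<subset> f (Suc i)" by blast
  have mono: "i \<le> j \<Longrightarrow> f i \<subseteq> f j" for i j
    using lift_Suc_mono_le[of f] f(2) by blast
  let ?U = "\<Union>(range f)"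
  have "is_ideal ?U"
    unfolding is_ideal_def
  proof (intro conjI ballI allI)
    show "0 \<in> ?U" using ideal_0[OF f(1)] by blast
  next
    fix x y assume "x \<in> ?U" "y \<in> ?U"
    then obtain i j where "x \<in> f i" "y \<in> f j" by blast
    then have "x \<in> f (max i j)" "y \<in> f (max i j)"
      using mono[of i "max i j"] mono[of j "max i j"] by auto
    then show "x + y \<in> ?U" using ideal_add[OF f(1)] by blast
  next
    fix r x assume "x \<in> ?U"
    then show "r * x \<in> ?U" using ideal_mult[OF f(1)] by blast
  qed
  note UI = this
  have NN: "\<forall>I::'a set. is_ideal I \<longrightarrow> (\<exists>S. finite S \<and> I = ideal_gen S)"
    using N unfolding noetherian_def .
  from NN[rule_format, OF UI] obtain S where S: "finite S" "?U = ideal_gen S" by (elim exE conjE)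
  then have "S \<subseteq> ?U" using ideal_gen_sub by blast
  then obtain M where "S \<subseteq> f M" using chain_bound[OF S(1)] f(2) by blast
  then have "?U \<subseteq> f M" using S(2) ideal_gen_least[OF f(1)] by metis
  then have "f (Suc M) \<subseteq> f M" by blast
  then show False using f(2)[of M] by blast
qed

lemma noeth_induct:
  assumes N: "noetherian TYPE('a::comm_ring_1)"
    and step: "\<And>I. is_ideal I \<Longrightarrow> (\<And>J. is_ideal J \<Longrightarrow> I \<subset> J \<Longrightarrow> Q J) \<Longrightarrow> Q I"
    and I: "is_ideal (I::'a set)"
  shows "Q I"
proof -
  have "is_ideal I \<longrightarrow> Q I"
    using noeth_wf[OF N]
  proof (induction I rule: wf_induct_rule)
    case (less I)
    then show ?case using step by blast
  qed
  then show ?thesis using I by blast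
qed

lemma fin_min_primes:
  assumes N: "noetherian TYPE('a::comm_ring_1)"
  shows "finite {P::'a set. is_minimal_prime P}"
proof -
  let ?Q = "\<lambda>I::'a set. \<exists>F. finite F \<and> (\<forall>P\<in>F. is_prime_ideal P)
      \<and> (\<forall>P. is_prime_ideal P \<and> I \<subseteq> P \<longrightarrow> (\<exists>Q\<in>F. Q \<subseteq> P))"
  have z: "is_ideal {0::'a}" unfolding is_ideal_def by auto
  have "?Q {0}"
  proof (rule noeth_induct[OF N _ z])
    fix I :: "'a set" assume I: "is_ideal I" and IH: "\<And>J. is_ideal J \<Longrightarrow> I \<subset> J \<Longrightarrow> ?Q J"
    show "?Q I"
    proof (cases "I = UNIV")
      case True
      then show ?thesis using prime_not_1 by (intro exI[of _ "{}"]) auto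
    next
      case False
      show ?thesis
      proof (cases "is_prime_ideal I")
        case True
        then show ?thesis by (intro exI[of _ "{I}"]) auto
      next
        case np: False
        then obtain a b where ab: "a * b \<in> I" "a \<notin> I" "b \<notin> I"
          using I False unfolding is_prime_ideal_def by blast
        have Ia: "is_ideal (ideal_gen (insert a I))" "I \<subset> ideal_gen (insert a I)"
          using ideal_gen_ideal ideal_gen_sub[of "insert a I"] ab by auto
        have Ib: "is_ideal (ideal_gen (insert b I))" "I \<subset> ideal_gen (insert b I)"
          using ideal_gen_ideal ideal_gen_sub[of "insert b I"] ab by auto
        obtain Fa where Fa: "finite Fa" "\<forall>P\<in>Fa. is_prime_ideal P"
          "\<forall>P. is_prime_ideal P \<and> ideal_gen (insert a I) \<subseteq> P \<longrightarrow> (\<exists>Q\<in>Fa. Q \<subseteq> P)"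
          using IH[OF Ia] by blast
        obtain Fb where Fb: "finite Fb" "\<forall>P\<in>Fb. is_prime_ideal P"
          "\<forall>P. is_prime_ideal P \<and> ideal_gen (insert b I) \<subseteq> P \<longrightarrow> (\<exists>Q\<in>Fb. Q \<subseteq> P)"
          using IH[OF Ib] by blast
        have "\<exists>Q\<in>Fa \<union> Fb. Q \<subseteq> P" if P: "is_prime_ideal P" "I \<subseteq> P" for P
        proof -
          have "a \<in> P \<or> b \<in> P" using P ab unfolding is_prime_ideal_def by blast
          then show ?thesis
          proof
            assume "a \<in> P"
            then have "ideal_gen (insert a I) \<subseteq> P"
              using P ideal_gen_least[of P "insert a I"] unfolding is_prime_ideal_def by blast
            from Fa(3)[rule_format, OF conjI[OF P(1) this]] obtain Q where "Q \<in> Fa" "Q \<subseteq> P"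
              by (elim bexE)
            then show ?thesis by (intro bexI[of _ Q]) simp_all
          next
            assume "b \<in> P"
            then have "ideal_gen (insert b I) \<subseteq> P"
              using P ideal_gen_least[of P "insert b I"] unfolding is_prime_ideal_def by blast
            from Fb(3)[rule_format, OF conjI[OF P(1) this]] obtain Q where "Q \<in> Fb" "Q \<subseteq> P"
              by (elim bexE)
            then show ?thesis by (intro bexI[of _ Q]) simp_all
          qed
        qed
        then show ?thesis using Fa Fb by (intro exI[of _ "Fa \<union> Fb"]) auto
      qed
    qed
  qed
  then obtain F :: "'a set set" where F: "finite F" "\<forall>P\<in>F. is_prime_ideal P"
    "\<forall>P. is_prime_ideal P \<and> {0} \<subseteq> P \<longrightarrow> (\<exists>Q\<in>F. Q \<subseteq> P)" by (elim exE conjE)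
  have "{P::'a set. is_minimal_prime P} \<subseteq> F"
  proof
    fix P :: "'a set" assume "P \<in> {P. is_minimal_prime P}"
    then have P: "is_minimal_prime P" by simp
    then have Pp: "is_prime_ideal P" unfolding is_minimal_prime_def by blast
    then have "{0} \<subseteq> P" using ideal_0 unfolding is_prime_ideal_def by blast
    from F(3)[rule_format, OF conjI[OF Pp this]] obtain Q where Q: "Q \<in> F" "Q \<subseteq> P" by (elim bexE)
    have "is_prime_ideal Q" using F(2) Q(1) by simp
    then have "\<not> Q \<subset> P" using P unfolding is_minimal_prime_def by simp
    then have "Q = P" using Q(2) by simp
    then show "P \<in> F" using \<open>Q \<in> F\<close> by simp
  qed
  then show ?thesis using F(1) finite_subset by blast
qed

lemma prime_prod:
  assumes P: "is_prime_ideal P" and A: "finite A"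
  shows "prod x A \<in> P \<Longrightarrow> \<exists>Q\<in>A. (x Q :: 'a::comm_ring_1) \<in> P"
  using A
proof (induction A rule: finite_induct)
  case empty then show ?case using prime_not_1[OF P] by simp
next
  case (insert a F)
  then have "x a * prod x F \<in> P" by simp
  then have "x a \<in> P \<or> prod x F \<in> P" using P unfolding is_prime_ideal_def by blast
  then show ?case using insert by blast
qed

lemma prime_avoid:
  assumes "finite F"
  shows "\<forall>P\<in>F. is_prime_ideal P \<Longrightarrow> is_ideal I \<Longrightarrow> I \<subseteq> \<Union>F \<Longrightarrow> \<exists>P\<in>F. I \<subseteq> (P::'a::comm_ring_1 set)"
  using assms
proof (induction F rule: finite_psubset_induct)
  case (psubset F)
  show ?case
  proof (cases "\<exists>P0\<in>F. I \<subseteq> \<Union>(F - {P0})")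
    case True
    then obtain P0 where "P0 \<in> F" "I \<subseteq> \<Union>(F - {P0})" by blast
    then have "\<exists>P\<in>F - {P0}. I \<subseteq> P"
      using psubset.IH[of "F - {P0}"] psubset.prems by blast
    then show ?thesis by blast
  next
    case False
    then have "\<forall>P\<in>F. \<exists>x. x \<in> I \<and> x \<notin> \<Union>(F - {P})" by blast
    then obtain x where x: "\<And>P. P \<in> F \<Longrightarrow> x P \<in> I \<and> x P \<notin> \<Union>(F - {P})" by metis
    have xP: "x P \<in> P" if "P \<in> F" for P
      using x[OF that] psubset.prems(3) by blast
    have "F \<noteq> {}" using psubset.prems(2,3) ideal_0 by blast
    then obtain P1 where P1: "P1 \<in> F" by blast
    show ?thesis
    proof (cases "F = {P1}")
      case True
      then show ?thesis using psubset.prems(3) by blast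
    next
      case False
      then obtain P2 where P2: "P2 \<in> F" "P2 \<noteq> P1" using P1 by blast
      have fin: "finite (F - {P1})" using psubset.hyps by simp
      let ?pr = "prod x (F - {P1})"
      have "?pr = x P2 * prod x (F - {P1} - {P2})"
        using prod.remove[OF fin, of P2 x] P2 by simp
      then have prI: "?pr \<in> I" using x[OF P2(1)] ideal_mult2[OF psubset.prems(2)] by simp
      have yI: "x P1 + ?pr \<in> I" using ideal_add[OF psubset.prems(2)] x[OF P1] prI by blast
      then obtain P where P: "P \<in> F" "x P1 + ?pr \<in> P" using psubset.prems(3) by blast
      have Pi: "is_ideal P" using psubset.prems(1) P(1) unfolding is_prime_ideal_def by blast
      show ?thesis
      proof (cases "P = P1")
        case True
        have "x P1 \<in> P" using xP[OF P1] True by simp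
        from ideal_diff[OF Pi P(2) this] have "?pr \<in> P" by simp
        then have "?pr \<in> P1" using True by simp
        then obtain Q where Q: "Q \<in> F - {P1}" "x Q \<in> P1"
          using prime_prod[OF _ fin] psubset.prems(1) P1 by blast
        then show ?thesis using x[of Q] P1 by blast
      next
        case False
        then have "?pr = x P * prod x (F - {P1} - {P})"
          using prod.remove[OF fin, of P x] P by simp
        then have "?pr \<in> P" using ideal_mult2[OF Pi xP[OF P(1)]] by simp
        from ideal_diff[OF Pi P(2) this] have "x P1 \<in> P" by simp
        then show ?thesis using x[OF P1] P False by blast
      qed
    qed
  qed
qed

theorem theorem2p7:
  fixes c :: "'a::comm_ring_1" and p w0 :: nat
  assumes "prime p" and "CHAR('a) = p" and "noetherian TYPE('a)"
    and "weak_test_element p w0 c"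
  shows "Usub p = Gann p (\<lambda>n. ideal_gen {c})
    \<and> (\<exists>b::'a set. \<forall>n. grann_comp p (Usub p) n = b)
    \<and> (\<forall>b::'a set. (\<forall>n. grann_comp p (Usub p) n = b) \<longrightarrow>
          b \<in> G_special_ideals p \<and> 0 < ideal_height b
          \<and> (\<forall>b'\<in>G_special_ideals p. 0 < ideal_height b' \<longrightarrow> b \<subseteq> b'))"
proof -
  note pr = assms(1) and ch = assms(2) and N = assms(3) and wt = assms(4)
  have Ueq: "Usub p = Gann p (\<lambda>n. ideal_gen {c})" using U_eq[OF pr ch wt] .
  have Usm: "Gsubmodule p (Usub p :: ('a set \<Rightarrow> nat \<Rightarrow> 'a set) set)"
    using Ueq Gann_submodule[OF pr ch] by simp
  have const: "\<forall>n. grann_comp p (Usub p) n = grann_comp p (Usub p :: ('a set \<Rightarrow> nat \<Rightarrow> 'a set) set) 0"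
    using grann_const[OF pr ch Usm] by blast
  have cR: "c \<in> R_circ" using wt unfolding weak_test_element_def by blast
  have UG: "Usub p \<subseteq> (Gcar p :: ('a set \<Rightarrow> nat \<Rightarrow> 'a set) set)" unfolding Usub_def by blast
  have cU: "c \<in> grann_comp p (Usub p :: ('a set \<Rightarrow> nat \<Rightarrow> 'a set) set) 0"
    using Ueq ideal_gen_sub[of "{c}"] unfolding grann_comp_def Gann_def by blast
  have main: "b \<in> G_special_ideals p \<and> 0 < ideal_height b
          \<and> (\<forall>b'\<in>G_special_ideals p. 0 < ideal_height b' \<longrightarrow> b \<subseteq> b')"
    if b: "\<forall>n. grann_comp p (Usub p) n = (b :: 'a set)" for b
  proof (intro conjI ballI impI)
    show "b \<in> G_special_ideals p" unfolding G_special_ideals_def using Usm b by blast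
  next
    have cb: "c \<in> b" using cU b by blast
    show "0 < ideal_height b"
    proof (rule height_pos_if)
      fix P :: "'a set" assume P: "is_prime_ideal P" "b \<subseteq> P"
      then have "\<not> is_minimal_prime P" using cR cb unfolding R_circ_def by blast
      then show "\<exists>Q. is_prime_ideal Q \<and> Q \<subset> P" using P unfolding is_minimal_prime_def by blast
    qed
  next
    fix b' :: "'a set" assume b': "b' \<in> G_special_ideals p" and hb': "0 < ideal_height b'"
    then obtain N' where N': "Gsubmodule p N'" "\<And>n. grann_comp p N' n = b'"
      unfolding G_special_ideals_def by blast
    have N'G: "N' \<subseteq> Gcar p" using N' unfolding Gsubmodule_def by blast
    have b'I: "is_ideal b'" using grann_ideal[OF pr ch N'G, of 0] N'(2) by simp
    have "\<exists>d\<in>b'. d \<in> R_circ"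
    proof (rule ccontr)
      assume "\<not> (\<exists>d\<in>b'. d \<in> R_circ)"
      then have "b' \<subseteq> \<Union>{P. is_minimal_prime P}" unfolding R_circ_def by blast
      then obtain P where P: "is_minimal_prime P" "b' \<subseteq> P"
        using prime_avoid[OF fin_min_primes[OF N], of b'] b'I unfolding is_minimal_prime_def
        by blast
      have "ideal_height b' \<le> prime_height P"
        using height_le[OF _ P(2)] P(1) unfolding is_minimal_prime_def by blast
      then show False using minimal_height0[OF P(1)] hb' by simp
    qed
    then obtain d where d: "d \<in> b'" "d \<in> R_circ" by blast
    have "N' \<subseteq> Usub p" using sub_U[OF pr ch wt N'G d(2)] d(1) N'(2) by blast
    then have "grann_comp p (Usub p) 0 \<subseteq> grann_comp p N' 0" unfolding grann_comp_def by blast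
    then show "b \<subseteq> b'" using b N'(2) by metis
  qed
  show ?thesis using Ueq const main by blast
qed

end
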